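(* Let $G>0$, $T>0$, and let $F\colon\mathbb R\to\mathbb R$ be continuous and $T$-periodic. There exists $a_0\in(0,1)$ such that for every $a$ with $a_0\le a<1$, the set $\mathbb R\times\Gamma_a$ is a bound set for $v_\lambda$ for all $\lambda\in[0,1]$.
   Context: For $\lambda\in[0,1]$ consider on $\mathbb R\times\Omega$, $\Omega=(-1,1)\times\mathbb R$, the system $\dot t=1$, $\dot x=p$, $\dot p=\big(G\sqrt{1-x^2}-\frac{p^2}{1-x^2}\big)x-\lambda(1-x^2)F(t)$, with right-hand side $v_\lambda(t,x,p)$; its solutions are unique, giving a local flow $\phi^\lambda$. For $0<a<1$, $\Gamma_a=\{(x,p)\in\mathbb R^2:|x|\le a\}$. For a closed set $E\subset\mathbb R\times\Omega$, $E$ is a bound set for $v_\lambda$ if for every $\epsilon>0$ there is no point $z\in\partial E$ with $\phi^\lambda_s(z)\in E$ for all $s\in(-\epsilon,\epsilon)$. *)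

theory Defs
  imports "HOL-Analysis.Analysis"
begin

definition vfield :: "real \<Rightarrow> (real \<Rightarrow> real) \<Rightarrow> real \<Rightarrow> real \<times> real \<times> real \<Rightarrow> real \<times> real \<times> real" where
  "vfield G F lam = (\<lambda>(t, x, p).
     (1, p, (G * sqrt (1 - x\<^sup>2) - p\<^sup>2 / (1 - x\<^sup>2)) * x - lam * (1 - x\<^sup>2) * F t))"

definition Omega :: "(real \<times> real) set" where
  "Omega = {(x, p). -1 < x \<and> x < 1}"

definition Gamma :: "real \<Rightarrow> (real \<times> real) set" where
  "Gamma a = {(x, p). \<bar>x\<bar> \<le> a}"

definition is_solution :: "('a::real_normed_vector \<Rightarrow> 'a) \<Rightarrow> 'a set \<Rightarrow> (real \<Rightarrow> 'a) \<Rightarrow> real set \<Rightarrow> bool" where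
  "is_solution v D y I \<longleftrightarrow>
     (\<forall>s\<in>I. y s \<in> D \<and> (y has_vector_derivative v (y s)) (at s within I))"

text \<open>Bound set: since solutions are unique, "phi_s(z) \<in> E for all s in (-eps,eps)"
  means exactly that the solution through z exists on (-eps,eps) and stays in E.\<close>
definition bound_set :: "('a::real_normed_vector \<Rightarrow> 'a) \<Rightarrow> 'a set \<Rightarrow> 'a set \<Rightarrow> bool" where
  "bound_set v D E \<longleftrightarrow> closed E \<and>
     (\<forall>\<epsilon>>0. \<not> (\<exists>z\<in>frontier E. \<exists>y. is_solution v D y {-\<epsilon><..<\<epsilon>} \<and> y 0 = z \<and>
                                 (\<forall>s\<in>{-\<epsilon><..<\<epsilon>}. y s \<in> E)))"

end

theory Submission
  imports Defs
begin

lemma key_real: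
  fixes X P Q :: "real \<Rightarrow> real" and a e :: real
  assumes e: "e > 0"
    and dX: "\<And>s. s \<in> {-e<..<e} \<Longrightarrow> (X has_real_derivative P s) (at s)"
    and dP: "\<And>s. s \<in> {-e<..<e} \<Longrightarrow> (P has_real_derivative Q s) (at s)"
    and X0: "X 0 = a"
    and Q0: "P 0 = 0 \<Longrightarrow> Q 0 > 0"
  shows "\<exists>s\<in>{-e<..<e}. X s > a"
proof -
  have z: "0 \<in> {-e<..<e}" using e by auto
  consider "P 0 > 0" | "P 0 < 0" | "P 0 = 0" by linarith
  then show ?thesis
  proof cases
    case 1
    from DERIV_pos_inc_right[OF dX[OF z] 1] obtain d where d: "d > 0"
      "\<And>h. h > 0 \<Longrightarrow> h < d \<Longrightarrow> X 0 < X (0 + h)" by blast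
    define h where "h = min d e / 2"
    have "h > 0" "h < d" "h < e" using d e by (auto simp: h_def)
    then show ?thesis using d(2)[of h] X0 by (intro bexI[of _ h]) auto
  next
    case 2
    from DERIV_neg_dec_left[OF dX[OF z] 2] obtain d where d: "d > 0"
      "\<And>h. h > 0 \<Longrightarrow> h < d \<Longrightarrow> X 0 < X (0 - h)" by blast
    define h where "h = min d e / 2"
    have "h > 0" "h < d" "h < e" using d e by (auto simp: h_def)
    then show ?thesis using d(2)[of h] X0 by (intro bexI[of _ "-h"]) auto
  next
    case 3
    from DERIV_pos_inc_right[OF dP[OF z] Q0[OF 3]] obtain d where d: "d > 0"
      "\<And>h. h > 0 \<Longrightarrow> h < d \<Longrightarrow> P 0 < P (0 + h)" by blast
    define h where "h = min d e / 2"
    have h: "h > 0" "h < d" "h < e" using d e by (auto simp: h_def)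
    have "\<exists>z. 0 < z \<and> z < h \<and> X h - X 0 = (h - 0) * P z"
      by (rule MVT2) (use h e in \<open>auto intro!: dX\<close>)
    then obtain w where w: "0 < w" "w < h" "X h - X 0 = h * P w" by auto
    have "P w > 0" using d(2)[of w] w h 3 by auto
    have "h * P w > 0" using h \<open>P w > 0\<close> by simp
    then have "X h > X 0" using w(3) by linarith
    then show ?thesis using h X0 by (intro bexI[of _ h]) auto
  qed
qed

lemma periodic_int:
  fixes F :: "real \<Rightarrow> real"
  assumes "\<And>t. F (t + T) = F t"
  shows "F (t + real_of_int k * T) = F t"
proof -
  have n: "F (t + real n * T) = F t" for n t
  proof (induction n arbitrary: t)
    case 0 then show ?case by simp
  next
    case (Suc n)
    have "F (t + real (Suc n) * T) = F ((t + real n * T) + T)" by (simp add: algebra_simps)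
    also have "\<dots> = F t" using assms Suc by simp
    finally show ?case .
  qed
  show ?thesis
  proof (cases "k \<ge> 0")
    case True
    then show ?thesis using n[of t "nat k"] by simp
  next
    case False
    have "F ((t + real_of_int k * T) + real (nat (-k)) * T) = F (t + real_of_int k * T)"
      by (rule n)
    moreover have "(t + real_of_int k * T) + real (nat (-k)) * T = t" using False by simp
    ultimately show ?thesis by simp
  qed
qed

lemma F_bounded:
  fixes F :: "real \<Rightarrow> real"
  assumes "T > 0" "continuous_on UNIV F" "\<And>t. F (t + T) = F t"
  shows "\<exists>B>0. \<forall>t. \<bar>F t\<bar> \<le> B"
proof -
  have "compact (F ` {0..T})"
    by (rule compact_continuous_image) (use assms(2) continuous_on_subset in auto)
  then obtain B where B: "\<And>u. u \<in> {0..T} \<Longrightarrow> \<bar>F u\<bar> \<le> B"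
    using compact_imp_bounded bounded_real by fastforce
  have "\<bar>F t\<bar> \<le> \<bar>B\<bar> + 1" for t
  proof -
    define k where "k = \<lfloor>t / T\<rfloor>"
    define u where "u = t - real_of_int k * T"
    have "real_of_int k \<le> t / T" "t / T < real_of_int k + 1" unfolding k_def by linarith+
    then have "real_of_int k * T \<le> t" "t < (real_of_int k + 1) * T"
      using assms(1) by (simp_all add: field_simps)
    then have u: "u \<in> {0..T}" unfolding u_def by (auto simp: algebra_simps)
    have "F t = F (u + real_of_int k * T)" unfolding u_def by simp
    also have "\<dots> = F u" by (rule periodic_int[of F T, OF assms(3)])
    finally show ?thesis using B[OF u] by simp
  qed
  then show ?thesis by (intro exI[of _ "\<bar>B\<bar> + 1"]) auto
qed

lemma E_eq: "UNIV \<times> Gamma a = {z. \<bar>fst (snd z)\<bar> \<le> a}"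
  by (auto simp: Gamma_def)

lemma frontier_E:
  fixes z :: "real \<times> real \<times> real"
  assumes "z \<in> frontier (UNIV \<times> Gamma a)"
  shows "\<bar>fst (snd z)\<bar> = a"
proof -
  have cl: "closed {z::real\<times>real\<times>real. \<bar>fst (snd z)\<bar> \<le> a}"
    by (intro closed_Collect_le continuous_intros)
  have op: "open {z::real\<times>real\<times>real. \<bar>fst (snd z)\<bar> < a}"
    by (intro open_Collect_less continuous_intros)
  have zc: "z \<in> closure {z. \<bar>fst (snd z)\<bar> \<le> a}" and zi: "z \<notin> interior {z. \<bar>fst (snd z)\<bar> \<le> a}"
    using assms by (auto simp: frontier_def E_eq)
  have sub: "{z::real\<times>real\<times>real. \<bar>fst (snd z)\<bar> < a} \<subseteq> interior {z. \<bar>fst (snd z)\<bar> \<le> a}"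
    by (rule interior_maximal[OF _ op]) auto
  have "z \<in> {z. \<bar>fst (snd z)\<bar> \<le> a}" using zc closure_closed[OF cl] by simp
  moreover have "z \<notin> {z. \<bar>fst (snd z)\<bar> < a}" using zi sub by blast
  ultimately show ?thesis by simp
qed

theorem lemma3p1:
  fixes G T :: real and F :: "real \<Rightarrow> real"
  assumes "G > 0" and "T > 0" and "continuous_on UNIV F" and "\<And>t. F (t + T) = F t"
  shows "\<exists>a0. 0 < a0 \<and> a0 < 1 \<and>
           (\<forall>a. a0 \<le> a \<and> a < 1 \<longrightarrow>
              (\<forall>lam\<in>{0..1}. bound_set (vfield G F lam) (UNIV \<times> Omega) (UNIV \<times> Gamma a)))"
proof -
  obtain B where B: "B > 0" "\<And>t. \<bar>F t\<bar> \<le> B"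
    using F_bounded[OF assms(2,3,4)] by blast
  define d where "d = min (1/2) (G / (4*B))"
  have d0: "d > 0" "d \<le> 1/2" "4 * d * B \<le> G"
    using B assms(1) by (auto simp: d_def min_def field_simps)
  define a0 where "a0 = sqrt (1 - d\<^sup>2)"
  have "d * d \<le> (1/2) * (1/2)" using d0 by (intro mult_mono) auto
  then have dsq: "d\<^sup>2 \<le> 1/4" by (simp add: power2_eq_square)
  have a0h: "a0 > 1/2" unfolding a0_def using dsq by (intro real_less_rsqrt) (simp add: power2_eq_square)
  have "sqrt (1 - d\<^sup>2) < sqrt 1" using d0 by (intro real_sqrt_less_mono) simp
  then have a0l: "a0 < 1" unfolding a0_def by simp
  have a0sq: "a0\<^sup>2 = 1 - d\<^sup>2" unfolding a0_def using dsq by simp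
  show ?thesis
  proof (intro exI[of _ a0] conjI allI impI ballI)
    show "0 < a0" using a0h by simp
    show "a0 < 1" by fact
    fix a lam assume a: "a0 \<le> a \<and> a < 1" and lam: "lam \<in> {0..1::real}"
    have apos: "a > 1/2" using a a0h by simp
    define s where "s = sqrt (1 - a\<^sup>2)"
    have a2: "a\<^sup>2 < 1" using a apos by (simp add: abs_square_less_1)
    have s0: "s > 0" unfolding s_def using a2 by simp
    have ssq: "s\<^sup>2 = 1 - a\<^sup>2" unfolding s_def using a2 by simp
    have "a0\<^sup>2 \<le> a\<^sup>2" using a a0h by (intro power_mono) auto
    then have "1 - a\<^sup>2 \<le> d\<^sup>2" using a0sq by simp
    then have "sqrt (1 - a\<^sup>2) \<le> sqrt (d\<^sup>2)" by (rule real_sqrt_le_mono)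
    then have sd: "s \<le> d" unfolding s_def using d0 by simp
    have lF: "\<bar>lam * F t\<bar> \<le> B" for t
    proof -
      have "\<bar>lam * F t\<bar> = lam * \<bar>F t\<bar>" using lam by (simp add: abs_mult)
      also have "\<dots> \<le> 1 * B" using lam B(2)[of t] B(1) by (intro mult_mono) auto
      finally show ?thesis by simp
    qed
    have key: "G * a - s * (lam * F t) > 0" "G * a + s * (lam * F t) > 0" for t
    proof -
      have "s * \<bar>lam * F t\<bar> \<le> d * B" using lF[of t] s0 sd B(1) by (intro mult_mono) auto
      then have "\<bar>s * (lam * F t)\<bar> \<le> d * B" using s0 by (simp add: abs_mult)
      moreover have "G * a > G * (1/2)" using apos assms(1) by (intro mult_strict_left_mono) auto
      then have "G * a > 2 * d * B" using d0 by linarith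
      moreover have "d * B > 0" using d0 B by simp
      ultimately show "G * a - s * (lam * F t) > 0" "G * a + s * (lam * F t) > 0" by linarith+
    qed
    have Qa: "(G * sqrt (1 - a\<^sup>2) - 0\<^sup>2 / (1 - a\<^sup>2)) * a - lam * (1 - a\<^sup>2) * F t > 0" for t
    proof -
      have "(G * sqrt (1 - a\<^sup>2) - 0\<^sup>2 / (1 - a\<^sup>2)) * a - lam * (1 - a\<^sup>2) * F t
            = s * (G * a - s * (lam * F t))" unfolding ssq[symmetric] s_def[symmetric]
        using s0 by (simp add: algebra_simps power2_eq_square)
      then show ?thesis using key(1)[of t] s0 by simp
    qed
    have Qb: "(G * sqrt (1 - (-a)\<^sup>2) - 0\<^sup>2 / (1 - (-a)\<^sup>2)) * (-a) - lam * (1 - (-a)\<^sup>2) * F t < 0" for t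
    proof -
      have "(G * sqrt (1 - (-a)\<^sup>2) - 0\<^sup>2 / (1 - (-a)\<^sup>2)) * (-a) - lam * (1 - (-a)\<^sup>2) * F t
            = - (s * (G * a + s * (lam * F t)))" unfolding power2_minus ssq[symmetric] s_def[symmetric]
        using s0 by (simp add: algebra_simps power2_eq_square)
      then show ?thesis using key(2)[of t] s0 by simp
    qed
    let ?V = "vfield G F lam"
    have V: "?V (t, x, p) = (1, p, (G * sqrt (1 - x\<^sup>2) - p\<^sup>2 / (1 - x\<^sup>2)) * x - lam * (1 - x\<^sup>2) * F t)"
      for t x p by (simp add: vfield_def)
    show "bound_set ?V (UNIV \<times> Omega) (UNIV \<times> Gamma a)"
      unfolding bound_set_def
    proof (intro conjI allI impI notI)
      show "closed (UNIV \<times> Gamma a)" unfolding E_eq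
        by (intro closed_Collect_le continuous_intros)
      fix e :: real assume e: "e > 0"
      assume "\<exists>z\<in>frontier (UNIV \<times> Gamma a). \<exists>y. is_solution ?V (UNIV \<times> Omega) y {-e<..<e} \<and> y 0 = z \<and>
                                 (\<forall>s\<in>{-e<..<e}. y s \<in> UNIV \<times> Gamma a)"
      then obtain z y where z: "z \<in> frontier (UNIV \<times> Gamma a)"
        and sol: "is_solution ?V (UNIV \<times> Omega) y {-e<..<e}" and y0: "y 0 = z"
        and inE: "\<And>s. s\<in>{-e<..<e} \<Longrightarrow> y s \<in> UNIV \<times> Gamma a" by blast
      define X where "X = (\<lambda>s. fst (snd (y s)))"
      define P where "P = (\<lambda>s. snd (snd (y s)))"
      define Q where "Q = (\<lambda>s. snd (snd (?V (y s))))"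
      have dy: "(y has_vector_derivative ?V (y s)) (at s)" if "s \<in> {-e<..<e}" for s
        using sol that unfolding is_solution_def by (metis at_within_open open_greaterThanLessThan)
      have dX: "(X has_real_derivative P s) (at s)" if "s \<in> {-e<..<e}" for s
      proof -
        have "((\<lambda>s. fst (snd (y s))) has_vector_derivative fst (snd (?V (y s)))) (at s)"
          by (rule bounded_linear.has_vector_derivative[OF bounded_linear_fst],
              rule bounded_linear.has_vector_derivative[OF bounded_linear_snd], rule dy[OF that])
        moreover have "fst (snd (?V (y s))) = P s" unfolding P_def
          by (cases "y s") (simp add: V)
        ultimately show ?thesis unfolding X_def has_real_derivative_iff_has_vector_derivative by simp
      qed
      have dP: "(P has_real_derivative Q s) (at s)" if "s \<in> {-e<..<e}" for s
      proof -
        have "((\<lambda>s. snd (snd (y s))) has_vector_derivative snd (snd (?V (y s)))) (at s)"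
          by (rule bounded_linear.has_vector_derivative[OF bounded_linear_snd],
              rule bounded_linear.has_vector_derivative[OF bounded_linear_snd], rule dy[OF that])
        then show ?thesis unfolding P_def Q_def has_real_derivative_iff_has_vector_derivative by simp
      qed
      have bnd: "\<bar>X s\<bar> \<le> a" if "s \<in> {-e<..<e}" for s
        using inE[OF that] unfolding X_def E_eq by simp
      have fz: "\<bar>X 0\<bar> = a" using frontier_E[OF z] y0 unfolding X_def by simp
      have Q0eq: "Q 0 = (G * sqrt (1 - (X 0)\<^sup>2) - (P 0)\<^sup>2 / (1 - (X 0)\<^sup>2)) * X 0 - lam * (1 - (X 0)\<^sup>2) * F (fst (y 0))"
        unfolding Q_def X_def P_def by (cases "y 0") (simp add: V)
      show False
      proof (cases "X 0 = a")
        case True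
        have "\<exists>s\<in>{-e<..<e}. X s > a"
        proof (rule key_real[OF e dX dP True])
          assume "P 0 = 0" then show "Q 0 > 0" using Q0eq True Qa by simp
        qed
        then show False using bnd by fastforce
      next
        case False
        then have X0: "X 0 = -a" using fz by linarith
        have "\<exists>s\<in>{-e<..<e}. (\<lambda>s. - X s) s > a"
        proof (rule key_real[OF e, of "\<lambda>s. - X s" "\<lambda>s. - P s" "\<lambda>s. - Q s"])
          show "((\<lambda>s. - X s) has_real_derivative - P s) (at s)" if "s \<in> {-e<..<e}" for s
            using dX[OF that] by (rule DERIV_minus)
          show "((\<lambda>s. - P s) has_real_derivative - Q s) (at s)" if "s \<in> {-e<..<e}" for s
            using dP[OF that] by (rule DERIV_minus)
          show "- X 0 = a" using X0 by simp
          assume "- P 0 = 0"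
          then have pz: "P 0 = 0" by simp
          have "Q 0 < 0" unfolding Q0eq X0 pz by (rule Qb)
          then show "- Q 0 > 0" by simp
        qed
        then show False using bnd by fastforce
      qed
    qed
  qed
qed

end
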